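(* Let $\alpha,\delta\in(0,1)$, $\epsilon>0$, and let $K\ge1$ be an integer. Let $s^1,\dots,s^K$ be real-valued score functions of the input. Let $\mathcal{T}_\mathrm{cal}=\{X_1,\dots,X_{n_\mathrm{cal}}\}$ be a calibration set of inputs drawn i.i.d. from the in-distribution input law $\mathrm{P}_X$, and let $X_\mathrm{test}$ be a new input. Write $T^i_j=s^i(X_j)$, $T^i_\mathrm{test}=s^i(X_\mathrm{test})$ and define conformal p-values $$\hat Q^i=\frac{1+|\{j\in\mathcal{T}_\mathrm{cal}: T^i_j\ge T^i_\mathrm{test}\}|}{1+n_\mathrm{cal}},\qquad i=1,\dots,K.$$ Let $m=\left|\left\{i:\hat Q^i\le\frac{\alpha}{(1+\epsilon)K}\right\}\right|$ and declare $X_\mathrm{test}$ to be OOD if $m\ge1$. Let $a=\lfloor (n_\mathrm{cal}+1)\frac{\alpha}{(1+\epsilon)K}\rfloor$, $b=(n_\mathrm{cal}+1)-a$, $\mu=\frac{a}{a+b}$, and suppose $n_\mathrm{cal}$ satisfies $I_{(1+\epsilon)\mu}(a,b)\ge1-\frac{\delta}{K}$, where $I_x(a,b)$ is the CDF at $x$ of a $\mathrm{Beta}(a,b)$ distribution. Let $\mathrm{H}_0$ denote the hypothesis that $X_\mathrm{test}\sim\mathrm{P}_X$ independently of $\mathcal{T}_\mathrm{cal}$. Then, with probability at least $1-\delta$ over the draw of $\mathcal{T}_\mathrm{cal}$, $$\mathrm{P}_{\mathrm{H}_0}(\text{declare OOD}\mid\mathcal{T}_\mathrm{cal})\le\alp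ha.$$
   Context: Each score $s^i(X)$ with $X\sim\mathrm{P}_X$ is assumed to have a continuous distribution; no assumption is made on the dependence among the scores. $\mathrm{P}_{\mathrm{H}_0}(\cdot\mid\mathcal{T}_\mathrm{cal})$ is the probability over $X_\mathrm{test}\sim\mathrm{P}_X$ with the calibration set held fixed. The condition on $n_\mathrm{cal}$ presupposes $a\ge1$ so that the Beta distribution is defined. *)

theory Defs
  imports "HOL-Probability.Probability"
begin

text \<open>The density is
  supported on [0,1], so the CDF is 0 for x \<le> 0 and 1 for x \<ge> 1.\<close>
definition beta_cdf :: "nat \<Rightarrow> nat \<Rightarrow> real \<Rightarrow> real" where
  "beta_cdf a b x =
     (\<integral>t\<in>{0..min x 1}. t ^ (a - 1) * (1 - t) ^ (b - 1) \<partial>lborel) /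
     (\<integral>t\<in>{0..1}. t ^ (a - 1) * (1 - t) ^ (b - 1) \<partial>lborel)"

definition conformal_pvalue ::
  "(nat \<Rightarrow> 'a \<Rightarrow> real) \<Rightarrow> nat \<Rightarrow> (nat \<Rightarrow> 'a) \<Rightarrow> nat \<Rightarrow> 'a \<Rightarrow> real" where
  "conformal_pvalue s n xs i x =
     (1 + real (card {j. j < n \<and> s i (xs j) \<ge> s i x})) / (1 + real n)"

definition declare_ood ::
  "(nat \<Rightarrow> 'a \<Rightarrow> real) \<Rightarrow> nat \<Rightarrow> nat \<Rightarrow> real \<Rightarrow> real \<Rightarrow> (nat \<Rightarrow> 'a) \<Rightarrow> 'a \<Rightarrow> bool" where
  "declare_ood s K n \<alpha> \<epsilon> xs x \<longleftrightarrow>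
     card {i. i < K \<and> conformal_pvalue s n xs i x \<le> \<alpha> / ((1 + \<epsilon>) * real K)} \<ge> 1"

end

theory Submission
  imports Defs
begin


definition bT :: "nat \<Rightarrow> nat \<Rightarrow> real \<Rightarrow> real" where
  "bT n k x = real (n choose k) * x ^ k * (1 - x) ^ (n - k)"
definition bu :: "nat \<Rightarrow> nat \<Rightarrow> real \<Rightarrow> real" where
  "bu n k x = real k * real (n choose k) * x ^ (k - 1) * (1 - x) ^ (n - k)"
definition bG :: "nat \<Rightarrow> nat \<Rightarrow> real \<Rightarrow> real" where
  "bG n a x = (\<Sum>k\<in>{a..n}. bT n k x)"

lemma bT_deriv: "(bT n k has_real_derivative (bu n k x - bu n (Suc k) x)) (at x)"
proof -
  have d: "(bT n k has_real_derivative real (n choose k) * (real k * x^(k-1) * (1-x)^(n-k) + x^k * (real (n-k) * (1-x)^(n-k-1) * (-1)))) (at x)"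
    unfolding bT_def[abs_def]
    by (auto intro!: derivative_eq_intros simp: algebra_simps)
  show ?thesis
  proof (cases "k < n")
    case True
    then obtain m where m: "n - k = Suc m" by (cases "n - k") auto
    have c: "real (Suc k) * real (n choose Suc k) = real (Suc m) * real (n choose k)"
    proof -
      have "Suc k * (n choose Suc k) = (n - k) * (n choose k)"
        using binomial_absorption[of k n] binomial_absorb_comp[of n k] by simp
      then show ?thesis using m by (metis of_nat_mult)
    qed
    have nm: "n - Suc k = m" using m by simp
    have "bu n k x - bu n (Suc k) x = real (n choose k) * (real k * x^(k-1) * (1-x)^(n-k) + x^k * (real (n-k) * (1-x)^(n-k-1) * (-1)))"
      unfolding bu_def nm using c m by (simp add: algebra_simps)
    then show ?thesis using d by simp
  next
    case False
    then have "n - k = 0" by simp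
    moreover have z: "real (n choose Suc k) = 0" using False by simp
    ultimately show ?thesis using d by (simp only: bu_def z) (simp add: mult_ac)
  qed
qed

lemma bG_deriv:
  assumes "a \<le> Suc n"
  shows "(bG n a has_real_derivative bu n a x) (at x)"
proof -
  have "((\<lambda>x. \<Sum>k\<in>{a..n}. bT n k x) has_real_derivative (\<Sum>k\<in>{a..n}. bu n k x - bu n (Suc k) x)) (at x)"
    by (intro DERIV_sum bT_deriv)
  moreover have "(\<Sum>k\<in>{a..n}. bu n k x - bu n (Suc k) x) = bu n a x - bu n (Suc n) x"
    using sum_Suc_diff[OF assms, of "\<lambda>k. bu n k x"] by (simp add: sum_subtractf)
  moreover have "bu n (Suc n) x = 0" by (simp add: bu_def)
  ultimately show ?thesis unfolding bG_def[abs_def] by simp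
qed

lemma bG_0: "1 \<le> a \<Longrightarrow> bG n a 0 = 0"
  unfolding bG_def bT_def by (intro sum.neutral) auto

lemma bG_1: "a \<le> n \<Longrightarrow> bG n a 1 = 1"
proof -
  assume an: "a \<le> n"
  have "bG n a 1 = (\<Sum>k\<in>{a..n}. if k = n then 1 else 0)"
    unfolding bG_def bT_def by (intro sum.cong) auto
  also have "\<dots> = 1" using an by simp
  finally show ?thesis .
qed

lemma bG_FTC:
  assumes "1 \<le> a" "a \<le> n" "0 \<le> y"
  shows "(\<integral>t\<in>{0..y}. t ^ (a - 1) * (1 - t) ^ (n - a) \<partial>lborel) = bG n a y / (real a * real (n choose a))"
proof -
  let ?c = "real a * real (n choose a)"
  have c: "?c > 0" using assms by simp
  have "(\<integral>t\<in>{0..y}. t ^ (a - 1) * (1 - t) ^ (n - a) \<partial>lborel)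
     = integral\<^sup>L lborel (\<lambda>t. indicator {0..y} t *\<^sub>R (t ^ (a - 1) * (1 - t) ^ (n - a)))"
    by (simp add: set_lebesgue_integral_def)
  also have "\<dots> = bG n a y / ?c - bG n a 0 / ?c"
  proof (rule integral_FTC_atLeastAtMost[OF assms(3)])
    fix x :: real
    have "((\<lambda>x. bG n a x / ?c) has_real_derivative bu n a x / ?c) (at x)"
      using bG_deriv[of a n x] assms by (intro DERIV_cdivide) auto
    moreover have "bu n a x / ?c = x ^ (a - 1) * (1 - x) ^ (n - a)"
      using c assms by (simp add: bu_def)
    ultimately show "((\<lambda>x. bG n a x / ?c) has_vector_derivative x ^ (a - 1) * (1 - x) ^ (n - a)) (at x within {0..y})"
      by (simp add: has_real_derivative_iff_has_vector_derivative[symmetric] has_field_derivative_at_within)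
  next
    show "continuous_on {0..y} (\<lambda>x. x ^ (a - 1) * (1 - x) ^ (n - a))"
      by (intro continuous_intros)
  qed
  finally show ?thesis using bG_0[OF assms(1)] by simp
qed

lemma beta_cdf_bG:
  assumes "1 \<le> a" "a \<le> n" "0 \<le> y" "y \<le> 1"
  shows "beta_cdf a (Suc n - a) y = bG n a y"
proof -
  have e: "Suc n - a - 1 = n - a" by simp
  have c: "real a * real (n choose a) > 0" using assms by simp
  note i1 = bG_FTC[OF assms(1,2,3)]
  note i2 = bG_FTC[OF assms(1,2) zero_le_one]
  have m: "min y 1 = y" "min 1 (1::real) = 1" using assms by auto
  show ?thesis unfolding beta_cdf_def e m i1 i2 bG_1[OF assms(2)] using c assms by simp
qed

lemma bG_mono:
  assumes "1 \<le> a" "a \<le> n" "0 \<le> x" "x \<le> y" "y \<le> 1"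
  shows "bG n a x \<le> bG n a y"
proof (rule DERIV_nonneg_imp_increasing_open[OF assms(4)])
  fix t assume "x < t" "t < y"
  then show "\<exists>d. (bG n a has_real_derivative d) (at t) \<and> 0 \<le> d"
    using bG_deriv[of a n t] assms by (intro exI[of _ "bu n a t"]) (auto simp: bu_def)
next
  show "continuous_on {x..y} (bG n a)"
    unfolding bG_def bT_def by (intro continuous_intros)
qed



lemma prod_binom_both:
  assumes M: "prob_space M" and B: "B \<in> sets M"
  shows "measure (PiM {..<n} (\<lambda>_. M)) {xs \<in> space (PiM {..<n} (\<lambda>_. M)). a \<le> card {j. j < n \<and> xs j \<in> B}}
         = bG n a (measure M B) \<and>
   {xs \<in> space (PiM {..<n} (\<lambda>_. M)). a \<le> card {j. j < n \<and> xs j \<in> B}} \<in> sets (PiM {..<n} (\<lambda>_. M))"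
proof -
  interpret M: prob_space M by fact
  interpret P: finite_product_prob_space "\<lambda>_. M" "{..<n}"
    by unfold_locales (auto simp: M prob_space_imp_sigma_finite)
  let ?P = "PiM {..<n} (\<lambda>_. M)"
  let ?p = "measure M B"
  define C where "C S = PiE {..<n} (\<lambda>j. if j \<in> S then B else space M - B)" for S
  define SS where "SS = {S. S \<subseteq> {..<n} \<and> a \<le> card S}"
  have finSS: "finite SS" unfolding SS_def by (rule finite_subset[of _ "Pow {..<n}"]) auto
  have Bsp: "B \<subseteq> space M" using B sets.sets_into_space by auto
  have ev: "{xs \<in> space ?P. a \<le> card {j. j < n \<and> xs j \<in> B}} = (\<Union>S\<in>SS. C S)"
  proof safe
    fix xs assume xs: "xs \<in> space ?P" "a \<le> card {j. j < n \<and> xs j \<in> B}"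
    have "{j. j < n \<and> xs j \<in> B} \<in> SS" using xs(2) unfolding SS_def by auto
    moreover have "xs \<in> C {j. j < n \<and> xs j \<in> B}"
      using xs(1) unfolding C_def space_PiM by (auto simp: PiE_iff)
    ultimately show "xs \<in> (\<Union>S\<in>SS. C S)" by blast
  next
    fix xs S assume S: "S \<in> SS" "xs \<in> C S"
    then show "xs \<in> space ?P" unfolding C_def space_PiM using Bsp
      by (auto simp: PiE_iff split: if_splits)
    have "{j. j < n \<and> xs j \<in> B} = S" using S unfolding C_def SS_def
      by (auto simp: PiE_iff split: if_splits)
    then show "a \<le> card {j. j < n \<and> xs j \<in> B}" using S unfolding SS_def by auto
  qed
  have Cs: "C S \<in> sets ?P" for S unfolding C_def using B
    by (intro sets_PiM_I_finite) auto
  have disj: "disjoint_family_on C SS"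
    unfolding disjoint_family_on_def
  proof (intro ballI impI equals0I)
    fix S S' xs assume S0: "S \<in> SS" "S' \<in> SS" "S \<noteq> S'" "xs \<in> C S \<inter> C S'"
    then have S: "S \<in> SS" "S' \<in> SS" "S \<noteq> S'" "xs \<in> C S" "xs \<in> C S'" by auto
    then obtain j where j: "j \<in> S \<and> j \<notin> S' \<or> j \<in> S' \<and> j \<notin> S" by blast
    have jn: "j < n" using S j unfolding SS_def by auto
    have h1: "xs j \<in> (if j \<in> S then B else space M - B)" using S(4) jn unfolding C_def by (auto simp: PiE_iff)
    have h2: "xs j \<in> (if j \<in> S' then B else space M - B)" using S(5) jn unfolding C_def by (auto simp: PiE_iff)
    from j h1 h2 show False by (auto split: if_splits)
  qed
  have mC: "measure ?P (C S) = ?p ^ card S * (1 - ?p) ^ (n - card S)" if "S \<in> SS" for S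
  proof -
    have Ssub: "S \<subseteq> {..<n}" using that unfolding SS_def by auto
    have "measure ?P (C S) = (\<Prod>j\<in>{..<n}. measure M (if j \<in> S then B else space M - B))"
      unfolding C_def using B by (intro P.prob_times) auto
    also have "\<dots> = (\<Prod>j\<in>{..<n}. if j \<in> S then ?p else 1 - ?p)"
      using M.prob_compl[OF B] by (intro prod.cong) auto
    also have "\<dots> = ?p ^ card S * (1 - ?p) ^ (n - card S)"
    proof -
      have "{..<n} \<inter> {x. x \<in> S} = S" "card ({..<n} \<inter> - {x. x \<in> S}) = n - card S"
        using Ssub by (auto simp: Diff_eq[symmetric] card_Diff_subset finite_subset)
      then show ?thesis by (simp add: prod.If_cases)
    qed
    finally show ?thesis .
  qed
  have "measure ?P (\<Union>S\<in>SS. C S) = (\<Sum>S\<in>SS. measure ?P (C S))"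
    using finSS Cs disj by (intro P.finite_measure_finite_Union) auto
  also have "\<dots> = (\<Sum>S\<in>SS. ?p ^ card S * (1 - ?p) ^ (n - card S))"
    using mC by (intro sum.cong) auto
  also have "\<dots> = (\<Sum>k\<in>{a..n}. \<Sum>S\<in>{S. S \<in> SS \<and> card S = k}. ?p ^ card S * (1 - ?p) ^ (n - card S))"
  proof (rule sum.group[symmetric, OF finSS])
    show "card ` SS \<subseteq> {a..n}" unfolding SS_def
      using card_mono[of "{..<n}"] by fastforce
  qed simp
  also have "\<dots> = (\<Sum>k\<in>{a..n}. bT n k ?p)"
  proof (intro sum.cong refl)
    fix k assume k: "k \<in> {a..n}"
    have e: "{S. S \<in> SS \<and> card S = k} = {S. S \<subseteq> {..<n} \<and> card S = k}"
      using k unfolding SS_def by auto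
    have "(\<Sum>S\<in>{S. S \<in> SS \<and> card S = k}. ?p ^ card S * (1 - ?p) ^ (n - card S))
        = (\<Sum>S\<in>{S. S \<subseteq> {..<n} \<and> card S = k}. ?p ^ k * (1 - ?p) ^ (n - k))"
      unfolding e by (intro sum.cong) auto
    also have "\<dots> = bT n k ?p" by (simp add: n_subsets bT_def)
    finally show "(\<Sum>S\<in>{S. S \<in> SS \<and> card S = k}. ?p ^ card S * (1 - ?p) ^ (n - card S)) = bT n k ?p" .
  qed
  finally have "measure ?P (\<Union>S\<in>SS. C S) = bG n a ?p" unfolding bG_def .
  moreover have "(\<Union>S\<in>SS. C S) \<in> sets ?P" by (rule sets.finite_UN[OF finSS Cs])
  ultimately show ?thesis unfolding ev by (rule conjI)
qed

lemma prod_binom: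
  assumes M: "prob_space M" and B: "B \<in> sets M"
  shows "measure (PiM {..<n} (\<lambda>_. M)) {xs \<in> space (PiM {..<n} (\<lambda>_. M)). a \<le> card {j. j < n \<and> xs j \<in> B}}
         = bG n a (measure M B)"
  using prod_binom_both[OF assms] by (rule conjunct1)

lemma prod_binom_sets:
  fixes n a :: nat
  assumes M: "prob_space M" and B: "B \<in> sets M"
  shows "{xs \<in> space (PiM {..<n} (\<lambda>_. M)). a \<le> card {j. j < n \<and> xs j \<in> B}} \<in> sets (PiM {..<n} (\<lambda>_. M))"
  using prod_binom_both[OF assms] by (rule conjunct2)



lemma quantile_set:
  fixes f :: "'a \<Rightarrow> real"
  assumes M: "prob_space M" and f: "f \<in> borel_measurable M" and p: "0 < p" "p < 1"
  shows "\<exists>B\<in>sets M. p \<le> measure M B \<and> (\<forall>x\<in>B. measure M {y\<in>space M. f x < f y} \<le> p)"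
proof -
  interpret M: prob_space M by fact
  define q where "q r = measure M {y\<in>space M. r < f y}" for r
  have qs: "{y\<in>space M. r < f y} \<in> sets M" for r using f by (simp add: borel_measurable_iff_greater)
  have qs2: "{y\<in>space M. r \<le> f y} \<in> sets M" for r using f by (simp add: borel_measurable_iff_ge)
  have qmono: "q r' \<le> q r" if "r \<le> r'" for r r'
    unfolding q_def using that qs by (intro M.finite_measure_mono) auto
  define D where "D = {r. p < q r}"
  show ?thesis
  proof (cases "D = {}")
    case True
    show ?thesis
    proof (intro bexI[of _ "space M"] conjI ballI)
      show "p \<le> measure M (space M)" using p by (simp add: M.prob_space)
      fix x assume "x \<in> space M"
      have "f x \<notin> D" using True by simp
      then show "measure M {y\<in>space M. f x < f y} \<le> p" unfolding D_def q_def by simp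
    qed simp
  next
    case Dne: False
    have "(\<lambda>m. measure M {y\<in>space M. real m < f y}) \<longlonglongrightarrow> measure M (\<Inter>m. {y\<in>space M. real m < f y})"
      using qs by (intro M.finite_Lim_measure_decseq) (auto simp: decseq_def)
    moreover have "(\<Inter>m. {y\<in>space M. real m < f y}) = {}"
    proof (rule equals0I)
      fix y assume y: "y \<in> (\<Inter>m. {y\<in>space M. real m < f y})"
      obtain m where "f y < real m" using reals_Archimedean2 by blast
      moreover have "real m < f y" using y by auto
      ultimately show False by simp
    qed
    ultimately have "(\<lambda>m. q (real m)) \<longlonglongrightarrow> 0" unfolding q_def by simp
    then have "eventually (\<lambda>m. q (real m) < p) sequentially" using p(1) by (rule order_tendstoD)
    then obtain m where m: "q (real m) < p" by (auto simp: eventually_sequentially)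
    have bdd: "bdd_above D"
    proof (rule bdd_aboveI[of _ "real m"])
      fix d assume "d \<in> D"
      then show "d \<le> real m" using m qmono[of "real m" d] unfolding D_def by force
    qed
    define c where "c = Sup D"
    have upper: "d \<le> c" if "d \<in> D" for d unfolding c_def using cSup_upper[OF that bdd] .
    show ?thesis
    proof (cases "c \<in> D")
      case True
      show ?thesis
      proof (intro bexI[of _ "{y\<in>space M. c < f y}"] conjI ballI)
        show "p \<le> measure M {y\<in>space M. c < f y}" using True unfolding D_def q_def by simp
        fix x assume x: "x \<in> {y\<in>space M. c < f y}"
        have "f x \<notin> D" using upper x by force
        then show "measure M {y\<in>space M. f x < f y} \<le> p" unfolding D_def q_def by simp
      qed (rule qs)
    next
      case False
      show ?thesis
      proof (intro bexI[of _ "{y\<in>space M. c \<le> f y}"] conjI ballI)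
        fix x assume x: "x \<in> {y\<in>space M. c \<le> f y}"
        have "f x \<notin> D" using upper x False by force
        then show "measure M {y\<in>space M. f x < f y} \<le> p" unfolding D_def q_def by simp
      next
        let ?A = "\<lambda>m::nat. {y\<in>space M. c - inverse (real (Suc m)) < f y}"
        have dec: "decseq ?A"
        proof (rule decseq_SucI)
          fix m :: nat
          have "inverse (real (Suc (Suc m))) \<le> inverse (real (Suc m))"
            by (simp add: le_imp_inverse_le)
          then have h: "c - inverse (real (Suc m)) \<le> c - inverse (real (Suc (Suc m)))" by linarith
          show "?A (Suc m) \<subseteq> ?A m" using h by (blast intro: le_less_trans)
        qed
        have lim: "(\<lambda>m. measure M (?A m)) \<longlonglongrightarrow> measure M (\<Inter>m. ?A m)"
          using qs dec by (intro M.finite_Lim_measure_decseq) auto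
        have inter: "(\<Inter>m. ?A m) = {y\<in>space M. c \<le> f y}"
        proof (intro equalityI subsetI)
          fix y assume y: "y \<in> (\<Inter>m. ?A m)"
          have "c \<le> f y"
          proof (rule ccontr)
            assume "\<not> c \<le> f y"
            then obtain m where m: "inverse (real (Suc m)) < c - f y"
              using reals_Archimedean[of "c - f y"] by auto
            have "c - inverse (real (Suc m)) < f y" using y by blast
            with m show False by linarith
          qed
          then show "y \<in> {y\<in>space M. c \<le> f y}" using y by auto
        next
          fix y assume "y \<in> {y\<in>space M. c \<le> f y}"
          then have "y \<in> ?A m" for m
            by (auto intro: less_le_trans[of _ c])
          then show "y \<in> (\<Inter>m. ?A m)" by blast
        qed
        have each: "p \<le> measure M (?A m)" for m
        proof -
          have "c - inverse (real (Suc m)) < c" by simp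
          then obtain d where d: "d \<in> D" "c - inverse (real (Suc m)) < d"
            using less_cSup_iff[OF Dne bdd] unfolding c_def by blast
          then have "p < q d" unfolding D_def by simp
          also have "q d \<le> q (c - inverse (real (Suc m)))" using d by (intro qmono) simp
          finally show ?thesis unfolding q_def by simp
        qed
        show "p \<le> measure M {y\<in>space M. c \<le> f y}"
          using lim unfolding inter by (rule LIMSEQ_le_const) (use each in auto)
      qed (rule qs2)
    qed
  qed
qed



theorem theorem2:
  fixes M :: "'a measure" and s :: "nat \<Rightarrow> 'a \<Rightarrow> real"
    and \<alpha> \<delta> \<epsilon> :: real and K n :: nat
  assumes "prob_space M"
    and "0 < \<alpha>" "\<alpha> < 1" "0 < \<delta>" "\<delta> < 1" "0 < \<epsilon>" "K \<ge> 1"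
    and meas: "\<And>i. i < K \<Longrightarrow> s i \<in> borel_measurable M"
    and cont: "\<And>i r. i < K \<Longrightarrow> measure M {x \<in> space M. s i x = r} = 0"
    and a_pos: "nat \<lfloor>(real n + 1) * (\<alpha> / ((1 + \<epsilon>) * real K))\<rfloor> \<ge> 1"
    and ncal: "let a = nat \<lfloor>(real n + 1) * (\<alpha> / ((1 + \<epsilon>) * real K))\<rfloor>;
                   b = (n + 1) - a;
                   \<mu> = real a / real (a + b)
               in beta_cdf a b ((1 + \<epsilon>) * \<mu>) \<ge> 1 - \<delta> / real K"
  shows "\<exists>E \<in> sets (PiM {..<n} (\<lambda>_. M)).
           measure (PiM {..<n} (\<lambda>_. M)) E \<ge> 1 - \<delta> \<and>
           (\<forall>xs \<in> E. measure M {x \<in> space M. declare_ood s K n \<alpha> \<epsilon> xs x} \<le> \<alpha>)"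
proof -
  interpret M: prob_space M by fact
  let ?P = "PiM {..<n} (\<lambda>_. M)"
  interpret P: prob_space ?P by (intro prob_space_PiM) (use assms(1) in auto)
  define t where "t = \<alpha> / ((1 + \<epsilon>) * real K)"
  define a where "a = nat \<lfloor>(real n + 1) * t\<rfloor>"
  define p where "p = (1 + \<epsilon>) * (real a / real (n + 1))"
  have Kpos: "real K \<ge> 1" using assms(7) by simp
  have tpos: "0 < t" unfolding t_def using assms(2,6) Kpos by simp
  have d1: "1 \<le> (1 + \<epsilon>) * real K" using mult_mono[of 1 "1+\<epsilon>" 1 "real K"] assms(6) Kpos by simp
  have "t \<le> \<alpha> / 1" unfolding t_def using d1 assms(2) by (intro divide_left_mono) auto
  then have "t \<le> \<alpha>" by simp
  then have t1: "t < 1" using assms(3) by simp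
  have a1: "1 \<le> a" using a_pos unfolding a_def t_def .
  have afl: "real a \<le> (real n + 1) * t"
    unfolding a_def using tpos by (simp add: of_nat_nat)
  also have "\<dots> < real n + 1" using t1 by simp
  finally have an: "a \<le> n" by simp
  have pt: "p \<le> (1 + \<epsilon>) * t" unfolding p_def using afl assms(6)
    by (intro mult_left_mono) (auto simp: divide_le_eq mult.commute add.commute)
  have Kp: "real K * p \<le> \<alpha>"
  proof -
    have "real K * p \<le> real K * ((1 + \<epsilon>) * t)" using pt by (intro mult_left_mono) auto
    also have "\<dots> = \<alpha>" unfolding t_def using assms(6) Kpos by simp
    finally show ?thesis .
  qed
  have p0: "0 < p" unfolding p_def using a1 assms(6) by simp
  have p1: "p < 1"
  proof -
    have "p \<le> \<alpha> / real K" using Kp Kpos by (simp add: le_divide_eq mult.commute)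
    also have "\<dots> \<le> \<alpha> / 1" using Kpos assms(2) by (intro divide_left_mono) auto
    finally show ?thesis using assms(3) by simp
  qed
  have bc: "beta_cdf a (Suc n - a) p \<ge> 1 - \<delta> / real K"
  proof -
    have "a + (n + 1 - a) = n + 1" using an by simp
    then show ?thesis using ncal unfolding Let_def a_def[symmetric, unfolded t_def] p_def
      by (simp add: a_def t_def)
  qed
  then have bGp: "bG n a p \<ge> 1 - \<delta> / real K"
    using beta_cdf_bG[OF a1 an] p0 p1 by simp
  have "\<forall>i\<in>{..<K}. \<exists>B. B \<in> sets M \<and> p \<le> measure M B \<and> (\<forall>x\<in>B. measure M {y\<in>space M. s i x < s i y} \<le> p)"
  proof
    fix i assume "i \<in> {..<K}"
    then have "i < K" by simp
    from quantile_set[OF assms(1) meas[OF this] p0 p1]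
    show "\<exists>B. B \<in> sets M \<and> p \<le> measure M B \<and> (\<forall>x\<in>B. measure M {y\<in>space M. s i x < s i y} \<le> p)"
      by blast
  qed
  then obtain B where B: "\<And>i. i < K \<Longrightarrow> B i \<in> sets M" "\<And>i. i < K \<Longrightarrow> p \<le> measure M (B i)"
    "\<And>i x. i < K \<Longrightarrow> x \<in> B i \<Longrightarrow> measure M {y\<in>space M. s i x < s i y} \<le> p"
    using bchoice[of "{..<K}"] by (metis lessThan_iff)
  define Ei where "Ei i = {xs \<in> space ?P. a \<le> card {j. j < n \<and> xs j \<in> B i}}" for i
  define E where "E = space ?P - (\<Union>i\<in>{..<K}. space ?P - Ei i)"
  have Eis: "Ei i \<in> sets ?P" if "i < K" for i
    unfolding Ei_def using prod_binom_sets[OF assms(1) B(1)[OF that]] .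
  have Ees: "E \<in> sets ?P" unfolding E_def
    by (intro sets.Diff sets.top sets.finite_UN finite_lessThan) (auto intro: Eis)
  have mEi: "measure ?P (space ?P - Ei i) \<le> \<delta> / real K" if "i < K" for i
  proof -
    have "measure ?P (space ?P - Ei i) = 1 - bG n a (measure M (B i))"
      using P.prob_compl[OF Eis[OF that]] prod_binom[OF assms(1) B(1)[OF that], of n a]
      unfolding Ei_def by simp
    also have "\<dots> \<le> 1 - bG n a p"
      using bG_mono[OF a1 an, of p "measure M (B i)"] p0 B(2)[OF that] by simp
    finally show ?thesis using bGp by simp
  qed
  have "measure ?P (space ?P - E) \<le> \<delta>"
  proof -
    have "space ?P - E = (\<Union>i\<in>{..<K}. space ?P - Ei i)" unfolding E_def by auto
    moreover have "measure ?P (\<Union>i\<in>{..<K}. space ?P - Ei i) \<le> (\<Sum>i\<in>{..<K}. measure ?P (space ?P - Ei i))"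
      by (rule P.finite_measure_subadditive_finite) (auto intro: Eis)
    ultimately have "measure ?P (space ?P - E) \<le> (\<Sum>i\<in>{..<K}. measure ?P (space ?P - Ei i))"
      by simp
    also have "\<dots> \<le> (\<Sum>i\<in>{..<K}. \<delta> / real K)" using mEi by (intro sum_mono) auto
    also have "\<dots> = \<delta>" using Kpos by simp
    finally show ?thesis .
  qed
  then have mE: "measure ?P E \<ge> 1 - \<delta>" using P.prob_compl[OF Ees] by simp
  show ?thesis
  proof (intro bexI[OF _ Ees] conjI ballI mE)
    fix xs assume xs: "xs \<in> E"
    have xsE: "a \<le> card {j. j < n \<and> xs j \<in> B i}" if "i < K" for i
      using xs that unfolding E_def Ei_def by auto
    define r where "r i = Min ((\<lambda>j. s i (xs j)) ` {j. j < n \<and> xs j \<in> B i})" for i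
    have rle: "measure M {y\<in>space M. r i < s i y} \<le> p" if "i < K" for i
    proof -
      have ne: "{j. j < n \<and> xs j \<in> B i} \<noteq> {}" using xsE[OF that] a1 by (metis card.empty le_zero_eq not_one_le_zero)
      have "r i \<in> (\<lambda>j. s i (xs j)) ` {j. j < n \<and> xs j \<in> B i}"
        unfolding r_def using ne by (intro Min_in) auto
      then obtain j where j: "j < n" "xs j \<in> B i" "r i = s i (xs j)" by auto
      show ?thesis using B(3)[OF that j(2)] j(3) by simp
    qed
    have sub: "{x \<in> space M. declare_ood s K n \<alpha> \<epsilon> xs x} \<subseteq> (\<Union>i\<in>{..<K}. {y\<in>space M. r i < s i y})"
    proof safe
      fix x assume x: "x \<in> space M" "declare_ood s K n \<alpha> \<epsilon> xs x"
      then have "1 \<le> card {i. i < K \<and> conformal_pvalue s n xs i x \<le> t}"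
        unfolding declare_ood_def t_def by simp
      then obtain i where i: "i < K" "conformal_pvalue s n xs i x \<le> t"
        by (metis (mono_tags, lifting) Collect_empty_eq card.empty not_one_le_zero)
      let ?cnt = "card {j. j < n \<and> s i (xs j) \<ge> s i x}"
      have "(1 + real ?cnt) / (1 + real n) \<le> t" using i(2) unfolding conformal_pvalue_def .
      then have "real (1 + ?cnt) \<le> (real n + 1) * t" by (simp add: divide_le_eq add.commute mult.commute)
      then have "int (1 + ?cnt) \<le> \<lfloor>(real n + 1) * t\<rfloor>" by (simp add: le_floor_iff)
      then have cnt: "?cnt < a" unfolding a_def by linarith
      show "x \<in> (\<Union>i\<in>{..<K}. {y\<in>space M. r i < s i y})"
      proof (rule ccontr)
        assume "x \<notin> (\<Union>i\<in>{..<K}. {y\<in>space M. r i < s i y})"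
        then have "s i x \<le> r i" using i(1) x(1) by (auto simp: not_less)
        have "{j. j < n \<and> xs j \<in> B i} \<subseteq> {j. j < n \<and> s i (xs j) \<ge> s i x}"
        proof safe
          fix j assume "j < n" "xs j \<in> B i"
          then have "r i \<le> s i (xs j)" unfolding r_def by (intro Min_le) auto
          then show "s i x \<le> s i (xs j)" using \<open>s i x \<le> r i\<close> by simp
        qed
        then have "card {j. j < n \<and> xs j \<in> B i} \<le> ?cnt" by (intro card_mono) auto
        then show False using xsE[OF i(1)] cnt by simp
      qed
    qed
    have Us: "{y\<in>space M. r i < s i y} \<in> sets M" if "i < K" for i
      using meas[OF that] by (simp add: borel_measurable_iff_greater)
    have "measure M (\<Union>i\<in>{..<K}. {y\<in>space M. r i < s i y}) \<le> (\<Sum>i\<in>{..<K}. measure M {y\<in>space M. r i < s i y})"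
      using Us by (intro M.finite_measure_subadditive_finite) auto
    also have "\<dots> \<le> (\<Sum>i\<in>{..<K}. p)" using rle by (intro sum_mono) auto
    also have "\<dots> \<le> \<alpha>" using Kp by simp
    finally have U: "measure M (\<Union>i\<in>{..<K}. {y\<in>space M. r i < s i y}) \<le> \<alpha>" .
    show "measure M {x \<in> space M. declare_ood s K n \<alpha> \<epsilon> xs x} \<le> \<alpha>"
    proof (cases "{x \<in> space M. declare_ood s K n \<alpha> \<epsilon> xs x} \<in> sets M")
      case True
      have "measure M {x \<in> space M. declare_ood s K n \<alpha> \<epsilon> xs x} \<le> measure M (\<Union>i\<in>{..<K}. {y\<in>space M. r i < s i y})"
        using sub Us by (intro M.finite_measure_mono) auto
      then show ?thesis using U by simp
    next
      case False
      then show ?thesis using measure_notin_sets[OF False] assms(2) by simp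
    qed
  qed
qed

end
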